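(* Fix $\varepsilon\in(0,1/2)$ and, for each integer $K\ge 2$, let $c=c(K)$ and $r=r(K)$ be positive integers satisfying \[ \left|\frac{c(K)}{K}-\left(1-\sqrt{1-2\varepsilon}\right)\right|<K^{-1/4},\qquad \left|\frac{r(K)}{K}-\left(1-\sqrt{1-2\varepsilon}\right)\right|<K^{-1/4}. \] Then \[ \lim_{K\to\infty}\left(1+\sum_{\ell=0}^{2K-2}\frac{K-c}{(\ell+1)K-h(\ell+1)}\prod_{t=1}^{\ell}\frac{K-r\,\mathbf 1_{\{t\text{ odd}\}}-c\,\mathbf 1_{\{t\text{ even}\}}-\lfloor t/2\rfloor}{tK-h(t)}\right)=\exp\left\{\sqrt{1-2\varepsilon}\right\}, \] where the empty product (for $\ell=0$) equals $1$.
   Context: For a positive integer $t$, $h(t)=\sum_{i=1}^{t}\lfloor i/2\rfloor$. *)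

theory Defs
  imports Complex_Main
begin

definition h :: "nat \<Rightarrow> nat" where
  "h t = (\<Sum>i=1..t. i div 2)"

end

theory Submission
  imports Defs "HOL-Analysis.Analysis"
begin

lemma h_bound: "4 * h t \<le> t * (t+1)"
proof (induction t)
  case 0 then show ?case by (simp add: h_def)
next
  case (Suc t)
  have "h (Suc t) = h t + Suc t div 2" by (simp add: h_def)
  moreover have "4 * (Suc t div 2) \<le> 2 * Suc t" by presburger
  ultimately show ?case using Suc by (simp add: algebra_simps)
qed

lemma denom_bound:
  assumes "1 \<le> t" "t + 1 \<le> 2*K"
  shows "real t * real K / 2 \<le> real t * real K - real (h t)"
proof -
  have "4 * real (h t) \<le> real t * (real t + 1)"
    using h_bound[of t] by (metis of_nat_1 of_nat_add of_nat_le_iff of_nat_mult of_nat_numeral)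
  moreover have "real t * (real t + 1) \<le> real t * (2 * real K)"
    using assms by (intro mult_left_mono) (auto simp flip: of_nat_add)
  ultimately show ?thesis by linarith
qed

lemma prod_div: "(\<Prod>t=1..l. x / real t) = x^l / fact l"
proof (induction l)
  case 0 then show ?case by simp
next
  case (Suc l)
  then show ?case by (simp add: prod.cl_ivl_Suc mult.commute)
qed

lemma core:
  fixes K cK rK l :: nat
  assumes "cK \<le> K" "rK \<le> K" "2 \<le> K" "l \<le> 2*K-2"
  shows "\<bar>(real K - real cK) / (real (l+1) * real K - real (h (l+1)))
            * (\<Prod>t=1..l.
                (real K - (if odd t then real rK else 0) - (if even t then real cK else 0)
                  - real (t div 2))
                / (real t * real K - real (h t)))\<bar> \<le> 2^(l+1) / fact (l+1)"
proof -
  have Gb: "\<bar>(real K - (if odd t then real rK else 0) - (if even t then real cK else 0)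
                  - real (t div 2)) / (real t * real K - real (h t))\<bar> \<le> 2 / real t"
    if t: "t \<in> {1..l}" for t
  proof -
    let ?N = "real K - (if odd t then real rK else 0) - (if even t then real cK else 0) - real (t div 2)"
    let ?D = "real t * real K - real (h t)"
    have D: "real t * real K / 2 \<le> ?D" using t assms by (intro denom_bound) auto
    have Dp: "0 < real t * real K / 2" using t assms by auto
    have "t div 2 \<le> K" using t assms by auto
    then have "real (t div 2) \<le> real K" by simp
    then have N: "\<bar>?N\<bar> \<le> real K" using assms by auto
    have Dpos: "0 < ?D" using D Dp by linarith
    have "\<bar>?N / ?D\<bar> = \<bar>?N\<bar> / ?D" by (simp only: abs_divide abs_of_pos[OF Dpos])
    also have "\<dots> \<le> real K / ?D" by (rule divide_right_mono[OF N]) (use Dpos in linarith)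
    also have "\<dots> \<le> real K / (real t * real K / 2)" by (rule divide_left_mono[OF D]) (simp, rule mult_pos_pos[OF Dpos Dp])
    also have "\<dots> = 2 / real t" using Dp by (auto simp: field_simps)
    finally show ?thesis .
  qed
  have P: "\<bar>\<Prod>t=1..l. (real K - (if odd t then real rK else 0) - (if even t then real cK else 0)
                  - real (t div 2)) / (real t * real K - real (h t))\<bar> \<le> 2^l / fact l"
    unfolding abs_prod prod_div[symmetric] by (intro prod_mono) (use Gb in auto)
  have F: "\<bar>(real K - real cK) / (real (l+1) * real K - real (h (l+1)))\<bar> \<le> 2 / real (l+1)"
  proof -
    let ?D = "real (l+1) * real K - real (h (l+1))"
    have D: "real (l+1) * real K / 2 \<le> ?D" using assms by (intro denom_bound) auto
    have Dp: "0 < real (l+1) * real K / 2" using assms by auto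
    have N: "\<bar>real K - real cK\<bar> \<le> real K" using assms by auto
    have Dpos: "0 < ?D" using D Dp by linarith
    have "\<bar>(real K - real cK) / ?D\<bar> = \<bar>real K - real cK\<bar> / ?D" by (simp only: abs_divide abs_of_pos[OF Dpos])
    also have "\<dots> \<le> real K / ?D" by (rule divide_right_mono[OF N]) (use Dpos in linarith)
    also have "\<dots> \<le> real K / (real (l+1) * real K / 2)" by (rule divide_left_mono[OF D]) (simp, rule mult_pos_pos[OF Dpos Dp])
    also have "\<dots> = 2 / real (l+1)" using Dp by (auto simp: field_simps)
    finally show ?thesis .
  qed
  have "2 / real (l+1) * (2^l / fact l) = (2::real)^(l+1) / fact (l+1)"
    by (simp add: field_simps)
  moreover have "2 / real (l+1) * (2^l / fact l) \<ge> \<bar>(real K - real cK) / (real (l+1) * real K - real (h (l+1)))\<bar> * \<bar>\<Prod>t=1..l. (real K - (if odd t then real rK else 0) - (if even t then real cK else 0)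
                  - real (t div 2)) / (real t * real K - real (h t))\<bar>"
    by (rule mult_mono[OF F P]) auto
  ultimately show ?thesis by (simp only: abs_mult)

qed

lemma ratio_lim:
  fixes N D :: "nat \<Rightarrow> real"
  assumes "(\<lambda>K. N K / real K) \<longlonglongrightarrow> p" "(\<lambda>K. D K / real K) \<longlonglongrightarrow> q" "q \<noteq> 0"
  shows "(\<lambda>K. N K / D K) \<longlonglongrightarrow> p / q"
proof -
  have L: "(\<lambda>K. (N K / real K) / (D K / real K)) \<longlonglongrightarrow> p / q"
    using assms by (intro tendsto_divide) auto
  moreover have E: "eventually (\<lambda>K. (N K / real K) / (D K / real K) = N K / D K) sequentially"
    using eventually_gt_at_top[of "0::nat"] by eventually_elim auto
  show ?thesis using tendsto_cong[OF E] L by (rule iffD1)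
qed

lemma sub_lim:
  fixes X :: "nat \<Rightarrow> real"
  assumes "(\<lambda>K. X K / real K) \<longlonglongrightarrow> p"
  shows "(\<lambda>K. (real K - X K) / real K) \<longlonglongrightarrow> 1 - p"
proof -
  have L: "(\<lambda>K. 1 - X K / real K) \<longlonglongrightarrow> 1 - p"
    using assms by (intro tendsto_intros) auto
  moreover have E: "eventually (\<lambda>K. 1 - X K / real K = (real K - X K) / real K) sequentially"
    using eventually_gt_at_top[of "0::nat"] by eventually_elim (auto simp: field_simps)
  show ?thesis using tendsto_cong[OF E] L by (rule iffD1)
qed

lemma den_lim:
  "(\<lambda>K. (real t * real K - real (h t)) / real K) \<longlonglongrightarrow> real t"
proof -
  have L: "(\<lambda>K. real t - real (h t) / real K) \<longlonglongrightarrow> real t"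
    by (intro tendsto_eq_intros) auto
  moreover have E: "eventually (\<lambda>K. real t - real (h t) / real K = (real t * real K - real (h t)) / real K) sequentially"
    using eventually_gt_at_top[of "0::nat"] by eventually_elim (auto simp: field_simps)
  show ?thesis using tendsto_cong[OF E] L by (rule iffD1)
qed

lemma add_lim:
  fixes X :: "nat \<Rightarrow> real"
  assumes "(\<lambda>K. X K / real K) \<longlonglongrightarrow> p"
  shows "(\<lambda>K. (X K + real d) / real K) \<longlonglongrightarrow> p"
proof -
  have "(\<lambda>K. X K / real K + real d / real K) \<longlonglongrightarrow> p + 0"
    using assms by (intro tendsto_intros) auto
  then show ?thesis by (simp add: add_divide_distrib)
qed

theorem lemma7p2:
  fixes \<epsilon> :: real and c r :: "nat \<Rightarrow> nat"
  assumes "0 < \<epsilon>" "\<epsilon> < 1/2"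
    and "\<And>K. K \<ge> 2 \<Longrightarrow> c K > 0 \<and> r K > 0"
    and "\<And>K. K \<ge> 2 \<Longrightarrow>
           \<bar>real (c K) / real K - (1 - sqrt (1 - 2*\<epsilon>))\<bar> < real K powr (-1/4)"
    and "\<And>K. K \<ge> 2 \<Longrightarrow>
           \<bar>real (r K) / real K - (1 - sqrt (1 - 2*\<epsilon>))\<bar> < real K powr (-1/4)"
  shows "(\<lambda>K. 1 + (\<Sum>l=0..2*K-2.
            (real K - real (c K)) / (real (l+1) * real K - real (h (l+1)))
            * (\<Prod>t=1..l.
                (real K - (if odd t then real (r K) else 0) - (if even t then real (c K) else 0)
                  - real (t div 2))
                / (real t * real K - real (h t)))))
         \<longlonglongrightarrow> exp (sqrt (1 - 2*\<epsilon>))"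
proof -
  define s where "s = sqrt (1 - 2*\<epsilon>)"
  have s0: "0 < s" using assms by (simp add: s_def)
  have s1: "s < 1" using assms by (simp add: s_def)
  define a where "a = 1 - s"
  have pw: "(\<lambda>K::nat. real K powr (-1/4)) \<longlonglongrightarrow> 0"
    by (rule tendsto_neg_powr) (auto simp: filterlim_real_sequentially)
  have climit: "(\<lambda>K. real (c K) / real K) \<longlonglongrightarrow> a"
  proof -
    have "eventually (\<lambda>K. norm (real (c K) / real K - a) \<le> real K powr (-1/4)) sequentially"
    proof (rule eventually_mono[OF eventually_ge_at_top[of "2::nat"]])
      fix K :: nat assume "2 \<le> K"
      from less_imp_le[OF assms(4)[OF this]]
      show "norm (real (c K) / real K - a) \<le> real K powr (-1/4)" unfolding real_norm_def a_def s_def .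
    qed
    then have "(\<lambda>K. real (c K) / real K - a) \<longlonglongrightarrow> 0"
      by (rule Lim_null_comparison[OF _ pw])
    then show ?thesis by (simp add: LIM_zero_iff)
  qed
  have rlimit: "(\<lambda>K. real (r K) / real K) \<longlonglongrightarrow> a"
  proof -
    have "eventually (\<lambda>K. norm (real (r K) / real K - a) \<le> real K powr (-1/4)) sequentially"
    proof (rule eventually_mono[OF eventually_ge_at_top[of "2::nat"]])
      fix K :: nat assume "2 \<le> K"
      from less_imp_le[OF assms(5)[OF this]]
      show "norm (real (r K) / real K - a) \<le> real K powr (-1/4)" unfolding real_norm_def a_def s_def .
    qed
    then have "(\<lambda>K. real (r K) / real K - a) \<longlonglongrightarrow> 0"
      by (rule Lim_null_comparison[OF _ pw])
    then show ?thesis by (simp add: LIM_zero_iff)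
  qed
  have a1: "a < 1" using s0 by (simp add: a_def)
  have evc: "eventually (\<lambda>K. c K \<le> K) sequentially"
    using order_tendstoD(2)[OF climit a1] eventually_gt_at_top[of "0::nat"]
    by eventually_elim (auto simp: divide_less_eq)
  have evr: "eventually (\<lambda>K. r K \<le> K) sequentially"
    using order_tendstoD(2)[OF rlimit a1] eventually_gt_at_top[of "0::nat"]
    by eventually_elim (auto simp: divide_less_eq)
  define G where "G K t = (real K - (if odd t then real (r K) else 0) - (if even t then real (c K) else 0)
                  - real (t div 2)) / (real t * real K - real (h t))" for K t
  define F where "F K l = (real K - real (c K)) / (real (l+1) * real K - real (h (l+1)))
            * (\<Prod>t=1..l. G K t)" for K l
  define T where "T l K = (if l \<le> 2*K-2 then F K l else 0)" for l K
  define M where "M l = (2::real)^(l+1) / fact (l+1)" for l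
  have sumeq: "(\<Sum>l=0..2*K-2. F K l) = (\<Sum>l. T l K)" for K
    by (subst suminf_finite[of "{0..2*K-2}"]) (auto simp: T_def)
  have Glim: "(\<lambda>K. G K t) \<longlonglongrightarrow> s / real t" if "1 \<le> t" for t
  proof -
    have num: "(\<lambda>K. (real K - ((if odd t then real (r K) else 0) + (if even t then real (c K) else 0)
                  + real (t div 2))) / real K) \<longlonglongrightarrow> 1 - a"
    proof (cases "odd t")
      case True
      then show ?thesis using sub_lim[OF add_lim[OF rlimit]] by simp
    next
      case False
      then show ?thesis using sub_lim[OF add_lim[OF climit]] by simp
    qed
    have "(\<lambda>K. (real K - ((if odd t then real (r K) else 0) + (if even t then real (c K) else 0)
                  + real (t div 2))) / (real t * real K - real (h t))) \<longlonglongrightarrow> (1 - a) / real t"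
      by (rule ratio_lim[OF num den_lim]) (use that in auto)
    then show ?thesis by (simp add: G_def a_def diff_diff_eq)
  qed
  have Flim: "(\<lambda>K. F K l) \<longlonglongrightarrow> s / real (l+1) * (\<Prod>t=1..l. s / real t)" for l
  proof -
    have "(\<lambda>K. (real K - real (c K)) / (real (l+1) * real K - real (h (l+1)))) \<longlonglongrightarrow> (1 - a) / real (l+1)"
      by (rule ratio_lim[OF sub_lim[OF climit] den_lim]) auto
    then have A: "(\<lambda>K. (real K - real (c K)) / (real (l+1) * real K - real (h (l+1)))) \<longlonglongrightarrow> s / real (l+1)"
      by (simp add: a_def)
    have B: "(\<lambda>K. \<Prod>t=1..l. G K t) \<longlonglongrightarrow> (\<Prod>t=1..l. s / real t)"
      by (rule tendsto_prod) (use Glim in auto)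
    show ?thesis unfolding F_def by (rule tendsto_mult[OF A B])
  qed
  have Tlim: "(\<lambda>K. T l K) \<longlonglongrightarrow> s^(l+1) / fact (l+1)" for l
  proof -
    have eq: "s / real (l+1) * (\<Prod>t=1..l. s / real t) = s^(l+1) / fact (l+1)"
      unfolding prod_div by (simp add: field_simps)
    have "eventually (\<lambda>K. F K l = T l K) sequentially"
      using eventually_ge_at_top[of "l+2"] by eventually_elim (auto simp: T_def)
    from tendsto_cong[OF this] Flim[of l] eq show ?thesis by simp
  qed
  have bound: "eventually (\<lambda>(l,K). norm (T l K) \<le> M l) (at_top \<times>\<^sub>F sequentially)"
  proof -
    have ev: "eventually (\<lambda>K. c K \<le> K \<and> r K \<le> K \<and> 2 \<le> K) sequentially"
      using evc evr eventually_ge_at_top[of "2::nat"] by eventually_elim auto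
    have "norm (T l K) \<le> M l" if "c K \<le> K \<and> r K \<le> K \<and> 2 \<le> K" for l K
    proof (cases "l \<le> 2*K-2")
      case True
      then have "T l K = F K l" by (simp add: T_def)
      moreover have "norm (F K l) \<le> M l"
        unfolding F_def G_def M_def real_norm_def by (rule core) (use that True in auto)
      ultimately show ?thesis by simp
    next
      case False
      then show ?thesis by (simp add: T_def M_def)
    qed
    then show ?thesis unfolding eventually_prod_filter
      by (intro exI[of _ "\<lambda>_. True"] exI[of _ "\<lambda>K. c K \<le> K \<and> r K \<le> K \<and> 2 \<le> K"]) (use ev in auto)
  qed
  have Msum: "summable M"
  proof -
    have "(\<lambda>n. (2::real)^n /\<^sub>R fact n) sums exp 2" by (rule exp_converges)
    then have "summable (\<lambda>n. (2::real)^(Suc n) /\<^sub>R fact (Suc n))"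
      by (subst summable_Suc_iff) (rule sums_summable)
    moreover have "(\<lambda>n. (2::real)^(Suc n) /\<^sub>R fact (Suc n)) = M"
      by (rule ext) (simp add: M_def field_simps)
    ultimately show ?thesis by simp
  qed
  have gsum: "(\<lambda>l. s^(l+1) / fact (l+1)) sums (exp s - 1)"
  proof -
    have "(\<lambda>n. s^n /\<^sub>R fact n) sums exp s" by (rule exp_converges)
    then have "(\<lambda>n. s^(Suc n) /\<^sub>R fact (Suc n)) sums (exp s - 1)"
      by (subst sums_Suc_iff) simp
    moreover have "(\<lambda>n. s^(Suc n) /\<^sub>R fact (Suc n)) = (\<lambda>l. s^(l+1) / fact (l+1))"
      by (rule ext) (simp add: field_simps)
    ultimately show ?thesis by simp
  qed
  have "(\<lambda>K. \<Sum>l. T l K) \<longlonglongrightarrow> (\<Sum>l. s^(l+1) / fact (l+1))"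
    using tannerys_theorem[of T "\<lambda>l. s^(l+1) / fact (l+1)" sequentially M, OF Tlim bound Msum] by simp
  then have "(\<lambda>K. \<Sum>l. T l K) \<longlonglongrightarrow> exp s - 1" using sums_unique[OF gsum] by simp
  then have "(\<lambda>K. 1 + (\<Sum>l. T l K)) \<longlonglongrightarrow> 1 + (exp s - 1)" by (intro tendsto_intros)
  then have "(\<lambda>K. 1 + (\<Sum>l=0..2*K-2. F K l)) \<longlonglongrightarrow> exp s" by (simp add: sumeq)
  then show ?thesis by (simp only: F_def G_def s_def)
qed

end
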